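(* Let $\Theta$ be a $k\times k$ complex matrix whose spectrum is disjoint from $-\mathbb{N}$, and let $\mathcal{E}(\Theta)$ be the free $B$-module with basis $e=(e_1,\dots,e_k)$ endowed with the action of $a$ determined by $ae=\Theta\,be$ (i.e. $ae_j=\sum_i\Theta_{j,i}be_i$) and $a(S(b)x)=S(b)ax+b^2S'(b)x$ for $S\in B$. Then the continuous actions of the algebras $\mathbb{C}[a]$ and $B$ on $\mathcal{E}(\Theta)$ are the restrictions of a continuous left action of $\tilde{\mathcal{A}}_{conv.}$ on $\mathcal{E}(\Theta)$.
   Context: $\tilde{\mathcal{A}}_{conv.}$ is the algebra of formal series $\sum\gamma_{p,q}a^pb^q$ in variables $a,b$ with $ab-ba=b^2$ (product extending that of the polynomial algebra with this relation) such that $|\gamma_{p,q}|\le C_RR^{p+q}q!$ for some $R>1$, $C_R>0$. $B=\mathbb{C}\{\{b\}\}\subset\tilde{\mathcal{A}}_{conv.}$ is the subalgebra of series $S(b)=\sum c_qb^q$ with $|c_q|\le CR^qq!$ for some $C,R$, and $S'$ is the derivative in $b$. The topologies are the natural inductive limit topologies defined by these Gevrey bounds (on $\mathcal{E}(\Theta)\simeq B^k$ coordinatewise). *)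

theory Defs
  imports "HOL-Analysis.Analysis"
begin

text \<open>Formal series in b are coefficient sequences c :: nat => complex (S(b) = sum c q b^q).
 Formal series sum gamma p q a^p b^q (normally ordered: powers of a to the left) are
 coefficient functions gamma :: nat => nat => complex.\<close>

definition gevreyB :: "(nat \<Rightarrow> complex) set" where
  "gevreyB = {c. \<exists>C R. C > 0 \<and> R > 1 \<and> (\<forall>q. norm (c q) \<le> C * R ^ q * fact q)}"

definition Atilde_conv :: "(nat \<Rightarrow> nat \<Rightarrow> complex) set" where
  "Atilde_conv = {g. \<exists>C R. C > 0 \<and> R > 1 \<and>
      (\<forall>p q. norm (g p q) \<le> C * R ^ (p + q) * fact q)}"

text \<open>The free B-module with basis e indexed by the finite type 'k: coordinates in B.\<close>
definition EThetaSpace :: "('k::finite \<Rightarrow> nat \<Rightarrow> complex) set" where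
  "EThetaSpace = {x. \<forall>i. x i \<in> gevreyB}"

text \<open>Product in the algebra with ab - ba = b^2, extending the polynomial product.
 It uses  b^q a^r = sum_j binom(r,j) (-1)^j q(q+1)...(q+j-1) a^(r-j) b^(q+j), so
 (a^p b^q)(a^r b^s) = sum_j binom(r,j) (-1)^j (q)_j a^(p+r-j) b^(q+j+s).
 The coefficient at a^m b^n collects p <= m, q,j,s with q+j+s = n, r = m-p+j.\<close>
definition amul :: "(nat \<Rightarrow> nat \<Rightarrow> complex) \<Rightarrow> (nat \<Rightarrow> nat \<Rightarrow> complex) \<Rightarrow> nat \<Rightarrow> nat \<Rightarrow> complex" where
  "amul g h m n = (\<Sum>p\<le>m. \<Sum>q\<le>n. \<Sum>j\<le>n. \<Sum>s\<le>n.
      if q + j + s = n then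
        g p q * h (m - p + j) s * of_nat ((m - p + j) choose j) * (-1) ^ j
          * pochhammer (of_nat q) j
      else 0)"

definition a_elem :: "nat \<Rightarrow> nat \<Rightarrow> complex" where
  "a_elem p q = (if p = 1 \<and> q = 0 then 1 else 0)"

definition embB :: "(nat \<Rightarrow> complex) \<Rightarrow> nat \<Rightarrow> nat \<Rightarrow> complex" where
  "embB S p q = (if p = 0 then S q else 0)"

definition B_smul :: "(nat \<Rightarrow> complex) \<Rightarrow> ('k \<Rightarrow> nat \<Rightarrow> complex) \<Rightarrow> 'k \<Rightarrow> nat \<Rightarrow> complex" where
  "B_smul S x i n = (\<Sum>q\<le>n. S q * x i (n - q))"

text \<open>Action of a on E(Theta): for x = sum_j S_j(b) e_j,
 a x = sum_j (S_j(b) a e_j + b^2 S_j'(b) e_j) with a e_j = sum_i Theta_{j,i} b e_i.\<close>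
definition a_act :: "complex^'k^'k \<Rightarrow> ('k \<Rightarrow> nat \<Rightarrow> complex) \<Rightarrow> 'k \<Rightarrow> nat \<Rightarrow> complex" where
  "a_act Theta x i n = (if n = 0 then 0 else
      (\<Sum>j\<in>UNIV. Theta $ j $ i * x j (n - 1)) + of_nat (n - 1) * x i (n - 1))"

definition mat_spectrum :: "complex^'k^'k \<Rightarrow> complex set" where
  "mat_spectrum A = {\<mu>. \<exists>v. v \<noteq> 0 \<and> A *v v = \<mu> *s v}"

end

theory Submission
  imports Defs
begin

lemma reindex5:
  fixes Psi :: "nat \<Rightarrow> nat \<Rightarrow> nat \<Rightarrow> nat \<Rightarrow> nat \<Rightarrow> complex"
  assumes Z: "\<And>p q r s j. j \<le> r \<Longrightarrow> n < p+q+r+s \<Longrightarrow> Psi p q r s j = 0"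
  shows "(\<Sum>m\<le>n. \<Sum>n'\<le>n. \<Sum>p\<le>m. \<Sum>q\<le>n'. \<Sum>j\<le>n'. \<Sum>s\<le>n'.
            if q+j+s = n' then Psi p q (m-p+j) s j else 0)
       = (\<Sum>p\<le>n. \<Sum>q\<le>n. \<Sum>r\<le>n. \<Sum>s\<le>n. \<Sum>j\<le>r. Psi p q r s j)"
proof -
  define W where "W = {(p,q,r,s,j). j \<le> r \<and> p+q+r+s \<le> n}"
  define f where "f = (\<lambda>(m,n',p,q,j,s). if q+j+s = n' then Psi p q (m-p+j) s j else 0)"
  define L0 where "L0 = (SIGMA m:{..n}. SIGMA n':{..n}. SIGMA p:{..m}. SIGMA q:{..n'}. SIGMA j:{..n'}. {..n'})"
  define R0 where "R0 = (SIGMA p:{..n}. SIGMA q:{..n}. SIGMA r:{..n}. SIGMA s:{..n}. {..r})"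
  define phi where "phi = (\<lambda>(p::nat,q::nat,r::nat,s::nat,j::nat). (p+r-j, q+j+s, p, q, j, s))"
  have finL0: "finite L0" unfolding L0_def by (intro finite_SigmaI) auto
  have finR0: "finite R0" unfolding R0_def by (intro finite_SigmaI) auto
  have WR0: "W \<subseteq> R0" unfolding W_def R0_def by auto
  have "(\<Sum>m\<le>n. \<Sum>n'\<le>n. \<Sum>p\<le>m. \<Sum>q\<le>n'. \<Sum>j\<le>n'. \<Sum>s\<le>n'.
            if q+j+s = n' then Psi p q (m-p+j) s j else 0) = sum f L0"
    unfolding L0_def f_def by (simp add: sum.Sigma split_def)
  also have "\<dots> = sum f (phi ` W)"
  proof (rule sum.mono_neutral_right[OF finL0])
    show "phi ` W \<subseteq> L0" unfolding W_def phi_def L0_def by auto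
    show "\<forall>i\<in>L0 - phi ` W. f i = 0"
    proof
      fix t assume t: "t \<in> L0 - phi ` W"
      obtain m n' p q j s where tt: "t = (m,n',p,q,j,s)" by (cases t) auto
      show "f t = 0"
      proof (cases "q+j+s = n'")
        case True
        have pm: "p \<le> m" using t tt unfolding L0_def by auto
        have "t = phi (p,q,m-p+j,s,j)" using tt True pm unfolding phi_def by auto
        hence "(p,q,m-p+j,s,j) \<notin> W" using t by auto
        hence "n < p+q+(m-p+j)+s" unfolding W_def by auto
        thus ?thesis using Z[of j "m-p+j" p q s] tt True unfolding f_def by auto
      qed (simp add: tt f_def)
    qed
  qed
  also have "\<dots> = sum (f \<circ> phi) W"
    by (rule sum.reindex) (auto simp: inj_on_def phi_def W_def)
  also have "\<dots> = sum (\<lambda>(p,q,r,s,j). Psi p q r s j) W"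
    by (rule sum.cong) (auto simp: f_def phi_def W_def)
  also have "\<dots> = sum (\<lambda>(p,q,r,s,j). Psi p q r s j) R0"
    by (rule sum.mono_neutral_left[OF finR0 WR0]) (auto simp: W_def R0_def intro!: Z)
  also have "\<dots> = (\<Sum>p\<le>n. \<Sum>q\<le>n. \<Sum>r\<le>n. \<Sum>s\<le>n. \<Sum>j\<le>r. Psi p q r s j)"
    unfolding R0_def by (simp add: sum.Sigma split_def)
  finally show ?thesis .
qed

definition Bsh :: "nat \<Rightarrow> ('k \<Rightarrow> nat \<Rightarrow> complex) \<Rightarrow> ('k \<Rightarrow> nat \<Rightarrow> complex)" where
  "Bsh q x = (\<lambda>i n. if q \<le> n then x i (n - q) else 0)"

lemma a_act_sum:
  "a_act Th (\<lambda>i n. \<Sum>k\<in>F. c k * f k i n) = (\<lambda>i n. \<Sum>k\<in>F. c k * a_act Th (f k) i n)"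
proof (intro ext)
  fix i n
  have "(\<Sum>j\<in>UNIV. Th $ j $ i * (\<Sum>k\<in>F. c k * f k j m)) = (\<Sum>j\<in>UNIV. \<Sum>k\<in>F. c k * (Th $ j $ i * f k j m))" for m
    by (simp add: sum_distrib_left mult_ac)
  also have "\<dots> m = (\<Sum>k\<in>F. \<Sum>j\<in>UNIV. c k * (Th $ j $ i * f k j m))" for m
    by (rule sum.swap)
  also have "\<dots> m = (\<Sum>k\<in>F. c k * (\<Sum>j\<in>UNIV. Th $ j $ i * f k j m))" for m
    by (simp add: sum_distrib_left)
  finally have X: "(\<Sum>j\<in>UNIV. Th $ j $ i * (\<Sum>k\<in>F. c k * f k j m)) = (\<Sum>k\<in>F. c k * (\<Sum>j\<in>UNIV. Th $ j $ i * f k j m))" for m .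
  show "a_act Th (\<lambda>i n. \<Sum>k\<in>F. c k * f k i n) i n = (\<Sum>k\<in>F. c k * a_act Th (f k) i n)"
    unfolding a_act_def apply (simp add: distrib_left sum.distrib sum_distrib_left mult_ac) by (intro impI sum.swap)
qed

lemma a_act_add:
  "a_act Th (\<lambda>i n. x i n + y i n) = (\<lambda>i n. a_act Th x i n + a_act Th y i n)"
  unfolding a_act_def by (auto simp: sum.distrib algebra_simps intro!: ext)

lemma a_act_smul:
  "a_act Th (\<lambda>i n. c * x i n) = (\<lambda>i n. c * a_act Th x i n)"
  unfolding a_act_def by (auto simp: sum_distrib_left algebra_simps intro!: ext)

lemma pow_sum:
  "(a_act Th ^^ p) (\<lambda>i n. \<Sum>k\<in>F. c k * f k i n) = (\<lambda>i n. \<Sum>k\<in>F. c k * (a_act Th ^^ p) (f k) i n)"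
  by (induction p) (simp_all add: a_act_sum)

lemma pow_add:
  "(a_act Th ^^ p) (\<lambda>i n. x i n + y i n) = (\<lambda>i n. (a_act Th ^^ p) x i n + (a_act Th ^^ p) y i n)"
  by (induction p) (simp_all add: a_act_add)

lemma pow_smul:
  "(a_act Th ^^ p) (\<lambda>i n. c * x i n) = (\<lambda>i n. c * (a_act Th ^^ p) x i n)"
  by (induction p) (simp_all add: a_act_smul)

lemma pow_diff:
  "(a_act Th ^^ p) (\<lambda>i n. x i n - c * y i n) = (\<lambda>i n. (a_act Th ^^ p) x i n - c * (a_act Th ^^ p) y i n)"
proof -
  have d: "a_act Th (\<lambda>i n. x i n - c * y i n) = (\<lambda>i n. a_act Th x i n - c * a_act Th y i n)" for x y
    unfolding a_act_def by (auto simp: sum_subtractf sum_distrib_left algebra_simps intro!: ext)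
  show ?thesis by (induction p) (simp_all add: d)
qed

lemma Bsh_sum: "Bsh q (\<lambda>i n. \<Sum>k\<in>F. c k * f k i n) = (\<lambda>i n. \<Sum>k\<in>F. c k * Bsh q (f k) i n)"
  unfolding Bsh_def by (auto intro!: ext)

lemma Bsh_add: "Bsh q (\<lambda>i n. x i n + y i n) = (\<lambda>i n. Bsh q x i n + Bsh q y i n)"
  unfolding Bsh_def by (auto intro!: ext)

lemma Bsh_smul: "Bsh q (\<lambda>i n. c * x i n) = (\<lambda>i n. c * Bsh q x i n)"
  unfolding Bsh_def by (auto intro!: ext)

lemma Bsh_Bsh: "Bsh q (Bsh s x) = Bsh (q + s) x"
  unfolding Bsh_def by (auto intro!: ext simp: diff_diff_add)

lemma Bsh_0: "Bsh 0 x = x"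
  unfolding Bsh_def by auto

lemma Bsh_a: "Bsh m (a_act Th y) = (\<lambda>i n. a_act Th (Bsh m y) i n - of_nat m * Bsh (Suc m) y i n)"
proof (intro ext)
  fix i n
  show "Bsh m (a_act Th y) i n = a_act Th (Bsh m y) i n - of_nat m * Bsh (Suc m) y i n"
  proof (cases "Suc m \<le> n")
    case True
    then obtain d where n: "n = Suc m + d" by (metis le_add_diff_inverse)
    show ?thesis unfolding Bsh_def a_act_def n
      by (simp add: algebra_simps)
  next
    case False
    then show ?thesis unfolding Bsh_def a_act_def by auto
  qed
qed

definition cc :: "nat \<Rightarrow> nat \<Rightarrow> nat \<Rightarrow> complex" where
  "cc r j q = of_nat (r choose j) * (-1) ^ j * pochhammer (of_nat q) j"

lemma pascal_sum:
  fixes v :: "nat \<Rightarrow> complex"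
  shows "(\<Sum>j\<le>r. cc r j q * v j) - (\<Sum>j\<le>r. cc r j q * of_nat (q+j) * v (Suc j))
       = (\<Sum>j\<le>Suc r. cc (Suc r) j q * v j)"
proof -
  have A: "(\<Sum>j\<le>Suc r. cc (Suc r) j q * v j) = cc (Suc r) 0 q * v 0 + (\<Sum>j\<le>r. cc (Suc r) (Suc j) q * v (Suc j))"
    by (rule sum.atMost_Suc_shift)
  have B: "cc (Suc r) (Suc j) q = cc r (Suc j) q - cc r j q * of_nat (q+j)" for j
    unfolding cc_def by (simp add: pochhammer_rec' algebra_simps)
  have C: "(\<Sum>j\<le>Suc r. cc r j q * v j) = cc r 0 q * v 0 + (\<Sum>j\<le>r. cc r (Suc j) q * v (Suc j))"
    by (rule sum.atMost_Suc_shift)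
  have D: "(\<Sum>j\<le>Suc r. cc r j q * v j) = (\<Sum>j\<le>r. cc r j q * v j)"
    by (simp add: cc_def)
  have E: "cc (Suc r) 0 q = cc r 0 q" by (simp add: cc_def)
  show ?thesis
    using A C D E by (simp add: B algebra_simps sum_subtractf)
qed

lemma commute:
  "Bsh q ((a_act Th ^^ r) y) = (\<lambda>i n. \<Sum>j\<le>r. cc r j q * (a_act Th ^^ (r - j)) (Bsh (q + j) y) i n)"
proof (induction r arbitrary: y)
  case 0
  then show ?case by (simp add: cc_def)
next
  case (Suc r)
  let ?A = "a_act Th"
  have "Bsh q ((?A ^^ Suc r) y) = Bsh q ((?A ^^ r) (?A y))"
    by (simp add: funpow_Suc_right del: funpow.simps)
  also have "\<dots> = (\<lambda>i n. \<Sum>j\<le>r. cc r j q * (?A ^^ (r - j)) (Bsh (q + j) (?A y)) i n)"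
    by (rule Suc.IH)
  also have "\<dots> = (\<lambda>i n. \<Sum>j\<le>r. cc r j q * ((?A ^^ (Suc r - j)) (Bsh (q + j) y) i n
            - of_nat (q+j) * (?A ^^ (Suc r - Suc j)) (Bsh (q + Suc j) y) i n))"
  proof (intro ext sum.cong refl)
    fix i n j assume j: "j \<in> {..r}"
    have e: "Suc r - j = Suc (r - j)" using j by auto
    show "cc r j q * (?A ^^ (r - j)) (Bsh (q + j) (?A y)) i n =
         cc r j q * ((?A ^^ (Suc r - j)) (Bsh (q + j) y) i n
            - of_nat (q+j) * (?A ^^ (Suc r - Suc j)) (Bsh (q + Suc j) y) i n)"
      unfolding Bsh_a pow_diff e by (simp add: funpow_Suc_right del: funpow.simps)
  qed
  also have "\<dots> = (\<lambda>i n. \<Sum>j\<le>Suc r. cc (Suc r) j q * (?A ^^ (Suc r - j)) (Bsh (q + j) y) i n)"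
  proof (intro ext)
    fix i n
    define v where "v j = (?A ^^ (Suc r - j)) (Bsh (q + j) y) i n" for j
    have "(\<Sum>j\<le>r. cc r j q * ((?A ^^ (Suc r - j)) (Bsh (q + j) y) i n
            - of_nat (q+j) * (?A ^^ (Suc r - Suc j)) (Bsh (q + Suc j) y) i n))
         = (\<Sum>j\<le>r. cc r j q * v j) - (\<Sum>j\<le>r. cc r j q * of_nat (q+j) * v (Suc j))"
      unfolding v_def by (simp add: sum_subtractf algebra_simps)
    also have "\<dots> = (\<Sum>j\<le>Suc r. cc (Suc r) j q * v j)" by (rule pascal_sum)
    finally show "(\<Sum>j\<le>r. cc r j q * ((?A ^^ (Suc r - j)) (Bsh (q + j) y) i n
            - of_nat (q+j) * (?A ^^ (Suc r - Suc j)) (Bsh (q + Suc j) y) i n))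
         = (\<Sum>j\<le>Suc r. cc (Suc r) j q * (?A ^^ (Suc r - j)) (Bsh (q + j) y) i n)"
      unfolding v_def .
  qed
  finally show ?case .
qed

definition Tpq :: "complex^'k^'k \<Rightarrow> nat \<Rightarrow> nat \<Rightarrow> ('k \<Rightarrow> nat \<Rightarrow> complex) \<Rightarrow> ('k \<Rightarrow> nat \<Rightarrow> complex)" where
  "Tpq Th p q x = (a_act Th ^^ p) (Bsh q x)"

definition actE :: "complex^'k^'k \<Rightarrow> (nat \<Rightarrow> nat \<Rightarrow> complex) \<Rightarrow> ('k \<Rightarrow> nat \<Rightarrow> complex) \<Rightarrow> ('k \<Rightarrow> nat \<Rightarrow> complex)" where
  "actE Th g x = (\<lambda>i n. \<Sum>p\<le>n. \<Sum>q\<le>n. g p q * Tpq Th p q x i n)"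

lemma pow_vanish:
  assumes "\<forall>i m. m < d \<longrightarrow> y i m = 0" "m < d + p"
  shows "(a_act Th ^^ p) y i m = 0"
  using assms(2)
proof (induction p arbitrary: m i)
  case 0 then show ?case using assms(1) by simp
next
  case (Suc p)
  show ?case
  proof (cases m)
    case 0 then show ?thesis by (simp add: a_act_def)
  next
    case (Suc m')
    then have "m' < d + p" using Suc.prems by simp
    then show ?thesis using Suc.IH Suc by (simp add: a_act_def)
  qed
qed

lemma T_vanish: "n < p + q \<Longrightarrow> Tpq Th p q x i n = 0"
  unfolding Tpq_def by (rule pow_vanish[where d = q]) (auto simp: Bsh_def)

lemma pow_local:
  assumes "\<forall>i m. m \<le> n \<longrightarrow> y i m = z i m" "m \<le> n"
  shows "(a_act Th ^^ p) y i m = (a_act Th ^^ p) z i m"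
  using assms(2)
proof (induction p arbitrary: m i)
  case 0 then show ?case using assms(1) by simp
next
  case (Suc p)
  have "m - 1 \<le> n" using Suc.prems by simp
  then show ?case using Suc.IH by (simp add: a_act_def)
qed

lemma T_local:
  assumes "\<forall>i m. m \<le> n \<longrightarrow> y i m = z i m"
  shows "Tpq Th p q y i n = Tpq Th p q z i n"
  unfolding Tpq_def by (rule pow_local[where n = n]) (use assms in \<open>auto simp: Bsh_def\<close>)

lemma actE_trunc:
  assumes "m \<le> N"
  shows "actE Th h x i m = (\<Sum>r\<le>N. \<Sum>s\<le>N. h r s * Tpq Th r s x i m)"
proof -
  have "actE Th h x i m = (\<Sum>r\<le>m. \<Sum>s\<le>N. h r s * Tpq Th r s x i m)"
    unfolding actE_def
    by (intro sum.cong refl sum.mono_neutral_left) (use assms in \<open>auto simp: T_vanish\<close>)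
  also have "\<dots> = (\<Sum>r\<le>N. \<Sum>s\<le>N. h r s * Tpq Th r s x i m)"
    by (intro sum.mono_neutral_left) (use assms in \<open>auto simp: T_vanish intro!: sum.neutral\<close>)
  finally show ?thesis .
qed

lemma actE_comp: "actE Th (amul g h) x = actE Th g (actE Th h x)"
proof (intro ext)
  fix i n
  let ?A = "a_act Th"
  define Psi where "Psi p q r s j = g p q * (h r s * (cc r j q * Tpq Th (p+r-j) (q+j+s) x i n))" for p q r s j
  define F where "F = (SIGMA r:{..n}. SIGMA s:{..n}. {..r})"
  have finF: "finite F" unfolding F_def by (intro finite_SigmaI) auto
  define Y where "Y = (\<lambda>i m. \<Sum>r\<le>n. \<Sum>s\<le>n. h r s * Tpq Th r s x i m)"
  have inner: "Tpq Th p q (actE Th h x) i n = (\<Sum>r\<le>n. \<Sum>s\<le>n. \<Sum>j\<le>r. h r s * (cc r j q * Tpq Th (p+r-j) (q+j+s) x i n))" for p q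
  proof -
    have "Tpq Th p q (actE Th h x) i n = Tpq Th p q Y i n"
      by (rule T_local[where n = n]) (auto simp: Y_def actE_trunc)
    also have "Bsh q Y = (\<lambda>i m. \<Sum>t\<in>F. (case t of (r,s,j) \<Rightarrow> h r s * cc r j q) *
                 (case t of (r,s,j) \<Rightarrow> (?A ^^ (r - j)) (Bsh (q + j + s) x)) i m)"
    proof (intro ext)
      fix i m
      have "Bsh q Y i m = (\<Sum>r\<le>n. \<Sum>s\<le>n. h r s * Bsh q (Tpq Th r s x) i m)"
        unfolding Bsh_def Y_def by (auto simp: sum_distrib_left)
      also have "\<dots> = (\<Sum>r\<le>n. \<Sum>s\<le>n. \<Sum>j\<le>r. h r s * cc r j q * (?A ^^ (r - j)) (Bsh (q + j + s) x) i m)"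
        unfolding Tpq_def commute Bsh_Bsh by (simp add: sum_distrib_left mult.assoc add.assoc)
      also have "\<dots> = (\<Sum>t\<in>F. (case t of (r,s,j) \<Rightarrow> h r s * cc r j q) *
                 (case t of (r,s,j) \<Rightarrow> (?A ^^ (r - j)) (Bsh (q + j + s) x)) i m)"
        unfolding F_def by (simp add: sum.Sigma split_def)
      finally show "Bsh q Y i m = \<dots>" .
    qed
    hence "Tpq Th p q Y i n = (\<Sum>t\<in>F. (case t of (r,s,j) \<Rightarrow> h r s * cc r j q) *
                 (?A ^^ p) (case t of (r,s,j) \<Rightarrow> (?A ^^ (r - j)) (Bsh (q + j + s) x)) i n)"
      unfolding Tpq_def by (simp add: pow_sum)
    also have "\<dots> = (\<Sum>t\<in>F. (case t of (r,s,j) \<Rightarrow> h r s * cc r j q * Tpq Th (p+r-j) (q+j+s) x i n))"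
    proof (intro sum.cong refl)
      fix t assume t: "t \<in> F"
      obtain r s j where tt: "t = (r,s,j)" by (cases t) auto
      have jr: "j \<le> r" using t tt F_def by auto
      have "(?A ^^ p) ((?A ^^ (r - j)) z) = (?A ^^ (p + r - j)) z" for z
      proof -
        have e: "p + r - j = p + (r - j)" using jr by simp
        show ?thesis by (simp only: e funpow_add o_apply)
      qed
      then show "(case t of (r,s,j) \<Rightarrow> h r s * cc r j q) *
                 (?A ^^ p) (case t of (r,s,j) \<Rightarrow> (?A ^^ (r - j)) (Bsh (q + j + s) x)) i n
           = (case t of (r,s,j) \<Rightarrow> h r s * cc r j q * Tpq Th (p+r-j) (q+j+s) x i n)"
        unfolding tt Tpq_def by simp
    qed
    also have "\<dots> = (\<Sum>r\<le>n. \<Sum>s\<le>n. \<Sum>j\<le>r. h r s * (cc r j q * Tpq Th (p+r-j) (q+j+s) x i n))"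
      unfolding F_def by (simp add: sum.Sigma split_def mult.assoc)
    finally show ?thesis .
  qed
  have R: "actE Th g (actE Th h x) i n = (\<Sum>p\<le>n. \<Sum>q\<le>n. \<Sum>r\<le>n. \<Sum>s\<le>n. \<Sum>j\<le>r. Psi p q r s j)"
    unfolding actE_def[of Th g] inner Psi_def by (simp add: sum_distrib_left)
  have L: "actE Th (amul g h) x i n = (\<Sum>m\<le>n. \<Sum>n'\<le>n. \<Sum>p\<le>m. \<Sum>q\<le>n'. \<Sum>j\<le>n'. \<Sum>s\<le>n'.
            if q+j+s = n' then Psi p q (m-p+j) s j else 0)"
    unfolding actE_def amul_def sum_distrib_right
  proof (intro sum.cong refl)
    fix m n' p q j s :: nat assume p: "p \<in> {..m}"
    show "(if q + j + s = n' then g p q * h (m - p + j) s * of_nat (m - p + j choose j) * (- 1) ^ j * pochhammer (of_nat q) j else 0) * Tpq Th m n' x i n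
       = (if q+j+s = n' then Psi p q (m-p+j) s j else 0)"
      using p by (auto simp: Psi_def cc_def)
  qed
  have Z: "Psi p q r s j = 0" if "j \<le> r" "n < p+q+r+s" for p q r s j
    unfolding Psi_def using that by (simp add: T_vanish)
  show "actE Th (amul g h) x i n = actE Th g (actE Th h x) i n"
    unfolding L R by (rule reindex5) (rule Z)
qed

definition sn :: "('k::finite \<Rightarrow> nat \<Rightarrow> complex) \<Rightarrow> nat \<Rightarrow> real" where
  "sn y m = (\<Sum>i\<in>UNIV. norm (y i m))"

definition KK :: "complex^'k^'k \<Rightarrow> real" where
  "KK Th = (\<Sum>j\<in>UNIV. \<Sum>i\<in>UNIV. norm (Th $ j $ i))"

lemma KK_nonneg: "0 \<le> KK Th"
  unfolding KK_def by (intro sum_nonneg) auto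

lemma sn_nonneg: "0 \<le> sn y m"
  unfolding sn_def by (intro sum_nonneg) auto

lemma A_bound: "sn (a_act Th y) (Suc m) \<le> (KK Th + of_nat m) * sn y m"
proof -
  have 1: "norm (a_act Th y i (Suc m)) \<le> (\<Sum>j\<in>UNIV. norm (Th $ j $ i) * norm (y j m)) + of_nat m * norm (y i m)" for i
  proof -
    have "norm (a_act Th y i (Suc m)) \<le> norm (\<Sum>j\<in>UNIV. Th $ j $ i * y j m) + norm (of_nat m * y i m)"
      unfolding a_act_def by (simp add: norm_triangle_ineq)
    also have "\<dots> \<le> (\<Sum>j\<in>UNIV. norm (Th $ j $ i) * norm (y j m)) + of_nat m * norm (y i m)"
      by (intro add_mono order_trans[OF norm_sum]) (auto simp: norm_mult)
    finally show ?thesis .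
  qed
  have "sn (a_act Th y) (Suc m) \<le> (\<Sum>i\<in>UNIV. (\<Sum>j\<in>UNIV. norm (Th $ j $ i) * norm (y j m)) + of_nat m * norm (y i m))"
    unfolding sn_def by (intro sum_mono 1)
  also have "\<dots> = (\<Sum>j\<in>UNIV. (\<Sum>i\<in>UNIV. norm (Th $ j $ i)) * norm (y j m)) + of_nat m * sn y m"
    unfolding sn_def by (simp add: sum.distrib sum_distrib_left sum_distrib_right) (rule sum.swap)
  also have "\<dots> \<le> (\<Sum>j\<in>UNIV. KK Th * norm (y j m)) + of_nat m * sn y m"
  proof -
    have kj: "(\<Sum>i\<in>UNIV. norm (Th $ j $ i)) \<le> KK Th" for j
      unfolding KK_def by (rule member_le_sum[where f="\<lambda>j. \<Sum>i\<in>UNIV. norm (Th $ j $ i)"]) (auto intro: sum_nonneg)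
    show ?thesis by (intro add_mono sum_mono mult_right_mono kj order_refl) auto
  qed
  also have "\<dots> = (KK Th + of_nat m) * sn y m"
    unfolding sn_def by (simp add: sum_distrib_left sum.distrib algebra_simps)
  finally show ?thesis .
qed

lemma pow_bound:
  "sn ((a_act Th ^^ p) y) (m + p) * fact m \<le> (KK Th + 1) ^ p * fact (m + p) * sn y m"
proof (induction p)
  case 0 then show ?case by simp
next
  case (Suc p)
  let ?K = "KK Th"
  have K0: "0 \<le> ?K" by (rule KK_nonneg)
  have "sn ((a_act Th ^^ Suc p) y) (m + Suc p) * fact m
        = sn (a_act Th ((a_act Th ^^ p) y)) (Suc (m + p)) * fact m" by simp
  also have "\<dots> \<le> (?K + of_nat (m + p)) * sn ((a_act Th ^^ p) y) (m + p) * fact m"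
    by (intro mult_right_mono A_bound) auto
  also have "\<dots> = (?K + of_nat (m + p)) * (sn ((a_act Th ^^ p) y) (m + p) * fact m)" by simp
  also have "\<dots> \<le> (?K + of_nat (m + p)) * ((?K + 1) ^ p * fact (m + p) * sn y m)"
    by (intro mult_left_mono Suc.IH) (use K0 in auto)
  also have "\<dots> \<le> ((?K + 1) * of_nat (Suc (m + p))) * ((?K + 1) ^ p * fact (m + p) * sn y m)"
  proof (intro mult_right_mono)
    show "?K + of_nat (m + p) \<le> (?K + 1) * of_nat (Suc (m + p))"
      using K0 by (simp add: algebra_simps)
    show "0 \<le> (?K + 1) ^ p * fact (m + p) * sn y m"
      by (intro mult_nonneg_nonneg zero_le_power) (use K0 sn_nonneg in auto)
  qed
  also have "\<dots> = (?K + 1) ^ Suc p * fact (m + Suc p) * sn y m"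
    by (simp add: algebra_simps)
  finally show ?case .
qed

lemma fact_mult_le: "(fact q :: real) * fact m \<le> fact (q + m)"
proof -
  have h: "fact q * fact m * ((q+m) choose q) = (fact (q+m) :: nat)"
    using binomial_fact_lemma[of q "q+m"] by simp
  have "0 < (q+m) choose q" by simp
  hence "fact q * fact m \<le> fact q * fact m * ((q+m) choose q)" by (simp add: Suc_leI)
  hence "fact q * fact m \<le> (fact (q+m) :: nat)" using h by simp
  hence "real (fact q * fact m) \<le> real (fact (q+m))" by (simp only: of_nat_le_iff)
  thus ?thesis by (simp only: of_nat_mult of_nat_fact)
qed

lemma sq_le_4pow: "real ((n+1)^2) \<le> 4 ^ n"
proof (induction n)
  case 0 then show ?case by simp
next
  case (Suc n)
  have "real ((Suc n + 1)^2) \<le> 4 * real ((n+1)^2)" by (simp add: power2_eq_square algebra_simps)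
  also have "\<dots> \<le> 4 * 4 ^ n" using Suc.IH by simp
  finally show ?case by simp
qed

lemma term_bound:
  fixes Th :: "complex^'k^'k" and x :: "'k \<Rightarrow> nat \<Rightarrow> complex"
  assumes R: "R > 1"
    and hg: "\<forall>p q. norm (g p q) \<le> M * R ^ (p + q) * fact q"
    and hx: "\<forall>i q. norm (x i q) \<le> N * R ^ q * fact q"
  shows "norm (g p q * Tpq Th p q x i n) \<le> real CARD('k) * M * N * ((KK Th + 1) * R) ^ n * fact n"
proof -
  let ?K = "KK Th" and ?c = "real CARD('k)"
  have K0: "0 \<le> ?K" by (rule KK_nonneg)
  have M0: "0 \<le> M" using order_trans[OF norm_ge_zero[of "g 0 0"]] hg[rule_format, of 0 0] by simp
  have N0: "0 \<le> N" using order_trans[OF norm_ge_zero[of "x undefined 0"]] hx[rule_format, of undefined 0] by simp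
  have rhs0: "0 \<le> ?c * M * N * ((?K + 1) * R) ^ n * fact n" using M0 N0 K0 R by simp
  show ?thesis
  proof (cases "n < p + q")
    case True then show ?thesis using rhs0 by (simp add: T_vanish)
  next
    case False
    define m where "m = n - p - q"
    have n: "n = m + q + p" using False m_def by simp
    define t where "t = norm (Tpq Th p q x i n)"
    have t0: "0 \<le> t" unfolding t_def by simp
    have "t \<le> sn (Tpq Th p q x) n" unfolding t_def sn_def by (rule member_le_sum) auto
    hence "t * fact (m + q) \<le> sn ((a_act Th ^^ p) (Bsh q x)) (m + q + p) * fact (m + q)"
      unfolding Tpq_def n by (intro mult_right_mono) auto
    also have "\<dots> \<le> (?K + 1) ^ p * fact n * sn (Bsh q x) (m + q)"
      unfolding n by (rule pow_bound)
    also have "sn (Bsh q x) (m + q) = sn x m" unfolding sn_def Bsh_def by simp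
    also have "sn x m \<le> ?c * (N * R ^ m * fact m)"
      unfolding sn_def using sum_mono[of UNIV "\<lambda>i. norm (x i m)" "\<lambda>i. N * R ^ m * fact m"] hx by simp
    finally have tb: "t * fact (m + q) \<le> (?K + 1) ^ p * fact n * (?c * (N * R ^ m * fact m))"
      using K0 by (simp add: mult_left_mono)
    have gb: "norm (g p q) \<le> M * R ^ (p + q) * fact q" using hg by simp
    have "norm (g p q) * t * fact (m + q) \<le> (M * R ^ (p + q) * fact q) * ((?K + 1) ^ p * fact n * (?c * (N * R ^ m * fact m)))"
      unfolding mult.assoc[of "norm (g p q)"] by (intro mult_mono gb tb) (use t0 M0 R in auto)
    also have "\<dots> = ?c * M * N * (?K + 1) ^ p * (R ^ (p + q) * R ^ m) * fact n * (fact q * fact m)"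
      by (simp add: algebra_simps)
    also have "\<dots> \<le> ?c * M * N * (?K + 1) ^ n * R ^ n * fact n * fact (q + m)"
    proof -
      have "R ^ (p + q) * R ^ m = R ^ n" unfolding n by (simp add: power_add algebra_simps)
      moreover have "(?K + 1) ^ p \<le> (?K + 1) ^ n" using K0 n by (intro power_increasing) auto
      ultimately show ?thesis
        using M0 N0 K0 R fact_mult_le[of q m]
        by (intro mult_mono mult_right_mono mult_left_mono) (auto simp del: of_nat_fact)
    qed
    also have "\<dots> = ?c * M * N * ((?K + 1) * R) ^ n * fact n * fact (m + q)"
      by (simp add: power_mult_distrib mult_ac add.commute)
    finally have "norm (g p q) * t * fact (m + q) \<le> ?c * M * N * ((?K + 1) * R) ^ n * fact n * fact (m + q)" .
    hence "norm (g p q) * t \<le> ?c * M * N * ((?K + 1) * R) ^ n * fact n"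
      by (smt (verit) fact_gt_zero mult_le_cancel_right_pos)
    thus ?thesis unfolding t_def by (simp add: norm_mult)
  qed
qed

lemma actE_bound:
  fixes Th :: "complex^'k^'k" and x :: "'k \<Rightarrow> nat \<Rightarrow> complex"
  assumes R: "R > 1"
    and hg: "\<forall>p q. norm (g p q) \<le> M * R ^ (p + q) * fact q"
    and hx: "\<forall>i q. norm (x i q) \<le> N * R ^ q * fact q"
  shows "norm (actE Th g x i n) \<le> real CARD('k) * M * N * (4 * ((KK Th + 1) * R)) ^ n * fact n"
proof -
  let ?B = "real CARD('k) * M * N * ((KK Th + 1) * R) ^ n * fact n"
  have "norm (actE Th g x i n) \<le> (\<Sum>p\<le>n. \<Sum>q\<le>n. norm (g p q * Tpq Th p q x i n))"
    unfolding actE_def by (intro order_trans[OF norm_sum] sum_mono norm_sum)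
  also have "\<dots> \<le> (\<Sum>p\<le>n. \<Sum>q\<le>n. ?B)"
    by (intro sum_mono term_bound[OF assms])
  also have "\<dots> = real ((n+1)^2) * ?B" by (simp add: power2_eq_square algebra_simps)
  also have "\<dots> \<le> 4 ^ n * ?B"
  proof (rule mult_right_mono[OF sq_le_4pow])
    have M0: "0 \<le> M" using order_trans[OF norm_ge_zero[of "g 0 0"]] hg[rule_format, of 0 0] by simp
    have N0: "0 \<le> N" using order_trans[OF norm_ge_zero[of "x undefined 0"]] hx[rule_format, of undefined 0] by simp
    show "0 \<le> ?B" using M0 N0 KK_nonneg[of Th] R by simp
  qed
  also have "\<dots> = real CARD('k) * M * N * (4 * ((KK Th + 1) * R)) ^ n * fact n"
  proof -
    have e: "(4 * ((KK Th + 1) * R))^n = 4^n * ((KK Th+1)*R)^n" by (rule power_mult_distrib)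
    show ?thesis by (simp only: e) (simp only: mult_ac)
  qed
  finally show ?thesis .
qed

lemma Tpq_add: "Tpq Th p q (\<lambda>i n. x i n + y i n) = (\<lambda>i n. Tpq Th p q x i n + Tpq Th p q y i n)"
  unfolding Tpq_def Bsh_add pow_add ..

lemma Tpq_smul: "Tpq Th p q (\<lambda>i n. c * x i n) = (\<lambda>i n. c * Tpq Th p q x i n)"
  unfolding Tpq_def Bsh_smul pow_smul ..

lemma actE_addg: "actE Th (\<lambda>p q. g p q + h p q) x = (\<lambda>i n. actE Th g x i n + actE Th h x i n)"
  unfolding actE_def by (simp add: sum.distrib distrib_right)

lemma actE_smulg: "actE Th (\<lambda>p q. c * g p q) x = (\<lambda>i n. c * actE Th g x i n)"
  unfolding actE_def by (simp add: sum_distrib_left mult.assoc)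

lemma actE_addx: "actE Th g (\<lambda>i n. x i n + y i n) = (\<lambda>i n. actE Th g x i n + actE Th g y i n)"
  unfolding actE_def Tpq_add by (simp add: sum.distrib distrib_left)

lemma actE_smulx: "actE Th g (\<lambda>i n. c * x i n) = (\<lambda>i n. c * actE Th g x i n)"
  unfolding actE_def Tpq_smul by (simp add: sum_distrib_left mult_ac)

lemma actE_a: "actE Th a_elem x = a_act Th x"
proof (intro ext)
  fix i n
  show "actE Th a_elem x i n = a_act Th x i n"
  proof (cases n)
    case 0 then show ?thesis by (simp add: actE_def a_elem_def a_act_def)
  next
    case (Suc n')
    have inner: "(\<Sum>q\<le>n. a_elem p q * Tpq Th p q x i n) = (if p = 1 then Tpq Th 1 0 x i n else 0)" for p
    proof (cases "p = 1")
      case True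
      have "(\<Sum>q\<le>n. a_elem p q * Tpq Th p q x i n) = (\<Sum>q\<le>n. if q = 0 then Tpq Th 1 0 x i n else 0)"
        using True by (intro sum.cong refl) (auto simp: a_elem_def)
      also have "\<dots> = Tpq Th 1 0 x i n" by (subst sum.delta) auto
      finally show ?thesis using True by simp
    next
      case False
      then show ?thesis by (simp add: a_elem_def)
    qed
    have "actE Th a_elem x i n = (\<Sum>p\<le>n. if p = 1 then Tpq Th 1 0 x i n else 0)"
      unfolding actE_def inner ..
    also have "\<dots> = Tpq Th 1 0 x i n" using Suc by (subst sum.delta) auto
    also have "\<dots> = a_act Th x i n" by (simp add: Tpq_def Bsh_0)
    finally show ?thesis .
  qed
qed

lemma actE_B: "actE Th (embB S) x = B_smul S x"
proof (intro ext)
  fix i n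
  have "actE Th (embB S) x i n = (\<Sum>p\<le>n. if p = 0 then (\<Sum>q\<le>n. S q * Tpq Th 0 q x i n) else 0)"
    unfolding actE_def embB_def by (intro sum.cong refl) auto
  also have "\<dots> = (\<Sum>q\<le>n. S q * Tpq Th 0 q x i n)" by simp
  also have "\<dots> = B_smul S x i n"
    unfolding B_smul_def Tpq_def Bsh_def by (intro sum.cong refl) auto
  finally show "actE Th (embB S) x i n = B_smul S x i n" .
qed

lemma actE_closed:
  fixes Th :: "complex^'k^'k"
  assumes g: "g \<in> Atilde_conv" and x: "x \<in> EThetaSpace"
  shows "actE Th g x \<in> EThetaSpace"
proof -
  obtain C1 R1 where C1: "C1 > 0" and R1: "R1 > 1" and hg1: "\<forall>p q. norm (g p q) \<le> C1 * R1 ^ (p + q) * fact q"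
    using g unfolding Atilde_conv_def by auto
  have "\<forall>i. \<exists>C R. C > 0 \<and> R > 1 \<and> (\<forall>q. norm (x i q) \<le> C * R ^ q * fact q)"
    using x unfolding EThetaSpace_def gevreyB_def by auto
  then obtain Cf Rf where hf: "\<forall>i. Cf i > 0 \<and> Rf i > 1 \<and> (\<forall>q. norm (x i q) \<le> Cf i * Rf i ^ q * fact q)"
    by metis
  define R where "R = R1 + (\<Sum>i\<in>UNIV. Rf i)"
  define N where "N = (\<Sum>i\<in>UNIV. Cf i)"
  have sR: "0 \<le> (\<Sum>i\<in>UNIV. Rf i)" using hf by (intro sum_nonneg) (auto intro: less_imp_le[OF order.strict_trans[OF zero_less_one]])
  have R: "R > 1" using R1 sR unfolding R_def by simp
  have RR1: "R1 \<le> R" using sR unfolding R_def by simp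
  have RRf: "Rf i \<le> R" for i
  proof -
    have "Rf i \<le> (\<Sum>i\<in>UNIV. Rf i)"
      by (rule member_le_sum) (use hf in \<open>auto intro: less_imp_le[OF order.strict_trans[OF zero_less_one]]\<close>)
    thus ?thesis using R1 unfolding R_def by simp
  qed
  have NC: "Cf i \<le> N" for i
    unfolding N_def by (rule member_le_sum) (use hf in \<open>auto intro: less_imp_le\<close>)
  have N0: "N > 0" using NC[of undefined] hf by (meson less_le_trans)
  have hg: "\<forall>p q. norm (g p q) \<le> C1 * R ^ (p + q) * fact q"
  proof (intro allI)
    fix p q
    have "C1 * R1 ^ (p + q) * fact q \<le> C1 * R ^ (p + q) * fact q"
      using C1 R1 RR1 by (intro mult_right_mono mult_left_mono power_mono) auto
    thus "norm (g p q) \<le> C1 * R ^ (p + q) * fact q" using hg1 by (meson order_trans)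
  qed
  have hx: "\<forall>i q. norm (x i q) \<le> N * R ^ q * fact q"
  proof (intro allI)
    fix i q
    have hfi: "0 < Cf i" "1 < Rf i" using hf by auto
    have "Cf i * Rf i ^ q * fact q \<le> N * R ^ q * fact q"
      using hfi NC[of i] RRf[of i] N0 by (intro mult_right_mono mult_mono power_mono) auto
    thus "norm (x i q) \<le> N * R ^ q * fact q" using hf by (meson order_trans)
  qed
  have "actE Th g x i \<in> gevreyB" for i
    unfolding gevreyB_def
  proof (intro CollectI exI conjI allI)
    show "0 < real CARD('k) * C1 * N" using C1 N0 by simp
    show "1 < 4 * ((KK Th + 1) * R)" proof -
      have "0 \<le> KK Th * R" using R KK_nonneg[of Th] by simp
      hence "R \<le> (KK Th + 1) * R" by (simp add: algebra_simps)
      thus ?thesis using R by linarith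
    qed
    show "norm (actE Th g x i n) \<le> real CARD('k) * C1 * N * (4 * ((KK Th + 1) * R)) ^ n * fact n" for n
      by (rule actE_bound[OF R hg hx])
  qed
  thus ?thesis unfolding EThetaSpace_def by auto
qed

theorem corollary1p1p9:
  fixes Theta :: "complex^'k^'k"
  assumes "\<forall>n::nat. - of_nat n \<notin> mat_spectrum Theta"
  shows "\<exists>act :: (nat \<Rightarrow> nat \<Rightarrow> complex) \<Rightarrow> ('k \<Rightarrow> nat \<Rightarrow> complex) \<Rightarrow> ('k \<Rightarrow> nat \<Rightarrow> complex).
      (\<forall>g\<in>Atilde_conv. \<forall>x\<in>EThetaSpace. act g x \<in> EThetaSpace)
    \<and> (\<forall>g\<in>Atilde_conv. \<forall>h\<in>Atilde_conv. \<forall>x\<in>EThetaSpace.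
          act (\<lambda>p q. g p q + h p q) x = (\<lambda>i n. act g x i n + act h x i n))
    \<and> (\<forall>g\<in>Atilde_conv. \<forall>c. \<forall>x\<in>EThetaSpace.
          act (\<lambda>p q. c * g p q) x = (\<lambda>i n. c * act g x i n))
    \<and> (\<forall>g\<in>Atilde_conv. \<forall>x\<in>EThetaSpace. \<forall>y\<in>EThetaSpace.
          act g (\<lambda>i n. x i n + y i n) = (\<lambda>i n. act g x i n + act g y i n))
    \<and> (\<forall>g\<in>Atilde_conv. \<forall>c. \<forall>x\<in>EThetaSpace.
          act g (\<lambda>i n. c * x i n) = (\<lambda>i n. c * act g x i n))
    \<and> (\<forall>g\<in>Atilde_conv. \<forall>h\<in>Atilde_conv. \<forall>x\<in>EThetaSpace.
          act (amul g h) x = act g (act h x))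
    \<and> (\<forall>x\<in>EThetaSpace. act a_elem x = a_act Theta x)
    \<and> (\<forall>S\<in>gevreyB. \<forall>x\<in>EThetaSpace. act (embB S) x = B_smul S x)
    \<and> (\<forall>R>1. \<exists>R'>1. \<exists>C>0. \<forall>g x M N.
          (\<forall>p q. norm (g p q) \<le> M * R ^ (p + q) * fact q) \<longrightarrow>
          (\<forall>i q. norm (x i q) \<le> N * R ^ q * fact q) \<longrightarrow>
          (\<forall>i n. norm (act g x i n) \<le> C * M * N * R' ^ n * fact n))"
proof (rule exI[of _ "actE Theta"], intro conjI ballI allI impI)
  fix R :: real assume R: "R > 1"
  show "\<exists>R'>1. \<exists>C>0. \<forall>g x M N.
          (\<forall>p q. norm (g p q) \<le> M * R ^ (p + q) * fact q) \<longrightarrow>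
          (\<forall>i q. norm (x i q) \<le> N * R ^ q * fact q) \<longrightarrow>
          (\<forall>i n. norm (actE Theta g x i n) \<le> C * M * N * R' ^ n * fact n)"
  proof (intro exI conjI allI impI)
    show "1 < 4 * ((KK Theta + 1) * R)" proof -
      have "0 \<le> KK Theta * R" using R KK_nonneg[of Theta] by simp
      hence "R \<le> (KK Theta + 1) * R" by (simp add: algebra_simps)
      thus ?thesis using R by linarith
    qed
    show "0 < real CARD('k)" by simp
    show "norm (actE Theta g x i n) \<le> real CARD('k) * M * N * (4 * ((KK Theta + 1) * R)) ^ n * fact n"
      if "\<forall>p q. norm (g p q) \<le> M * R ^ (p + q) * fact q" "\<forall>i q. norm (x i q) \<le> N * R ^ q * fact q"
      for g x M N i n
      by (rule actE_bound[OF R that])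
  qed
qed (simp_all add: actE_closed actE_addg actE_smulg actE_addx actE_smulx actE_comp actE_a actE_B)

end
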